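(* Let $\mathbb{K}$ be a subfield of $\mathbb{C}$, $q\ge1$, $A\in M_q(\mathbb{K}(z))$, and let $\mathcal S$ be the space of solutions of $Y'=AY$. Let $\alpha\in\mathbb{K}^*$ be a point which is not a singularity of $Y'=AY$. Then for any $P_1,\dots,P_q\in\mathbb{K}[z]$, the image of $\mathcal R[P_1,\dots,P_q]=\{Y=(y_1,\dots,y_q)\in\mathcal S:\ \sum_{i=1}^qP_i(z)y_i(z)\equiv0\}$ under the isomorphism $\mathcal S\to\mathbb{C}^q$, $Y\mapsto Y(\alpha)$, is a subspace of $\mathbb{C}^q$ defined over $\mathbb{K}$.
   Context: A subspace of $\mathbb{C}^q$ is defined over $\mathbb{K}$ if it has a $\mathbb{C}$-basis consisting of vectors in $\mathbb{K}^q$ (equivalently, it is the solution set of a system of linear equations with coefficients in $\mathbb{K}$). *)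

theory Defs
  imports "HOL-Analysis.Analysis" "HOL-Computational_Algebra.Polynomial"
begin

definition subfield_of_C :: "complex set \<Rightarrow> bool" where
  "subfield_of_C K \<longleftrightarrow> 0 \<in> K \<and> 1 \<in> K \<and>
     (\<forall>x\<in>K. \<forall>y\<in>K. x + y \<in> K \<and> x - y \<in> K \<and> x * y \<in> K) \<and>
     (\<forall>x\<in>K. x \<noteq> 0 \<longrightarrow> inverse x \<in> K)"

definition poly_over :: "complex set \<Rightarrow> complex poly \<Rightarrow> bool" where
  "poly_over K p \<longleftrightarrow> (\<forall>n. coeff p n \<in> K)"

definition defined_over :: "complex set \<Rightarrow> (complex ^ 'q) set \<Rightarrow> bool" where
  "defined_over K V \<longleftrightarrow>
     (\<exists>B. B \<subseteq> {v. \<forall>i. v $ i \<in> K} \<and> \<not> vec.dependent B \<and> vec.span B = V)"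

text \<open>Y solves Y' = A Y on the set U, where the entry A i j of the matrix of rational
  functions is given as the quotient of polynomials Pn i j / Pd i j.\<close>
definition solves_on ::
  "('q \<Rightarrow> 'q \<Rightarrow> complex poly) \<Rightarrow> ('q \<Rightarrow> 'q \<Rightarrow> complex poly) \<Rightarrow> complex set
    \<Rightarrow> (complex \<Rightarrow> complex ^ 'q::finite) \<Rightarrow> bool" where
  "solves_on Pn Pd U Y \<longleftrightarrow>
     (\<forall>z\<in>U. \<forall>i. ((\<lambda>w. Y w $ i) has_field_derivative
         (\<Sum>j\<in>UNIV. (poly (Pn i j) z / poly (Pd i j) z) * Y z $ j)) (at z))"

end

theory Submission
  imports Defs "HOL-Complex_Analysis.Complex_Analysis"
begin


lemma sfK:
  assumes "subfield_of_C K"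
  shows "0 \<in> K" "1 \<in> K" "x \<in> K \<Longrightarrow> y \<in> K \<Longrightarrow> x + y \<in> K"
    "x \<in> K \<Longrightarrow> y \<in> K \<Longrightarrow> x - y \<in> K" "x \<in> K \<Longrightarrow> y \<in> K \<Longrightarrow> x * y \<in> K"
    "x \<in> K \<Longrightarrow> y \<in> K \<Longrightarrow> x / y \<in> K" "x \<in> K \<Longrightarrow> - x \<in> K"
    "x \<in> K \<Longrightarrow> inverse x \<in> K"
proof -
  have inv: "\<And>x. x \<in> K \<Longrightarrow> inverse x \<in> K" using assms
    by (metis inverse_zero subfield_of_C_def)
  show "0 \<in> K" "1 \<in> K" "x \<in> K \<Longrightarrow> y \<in> K \<Longrightarrow> x + y \<in> K" "x \<in> K \<Longrightarrow> y \<in> K \<Longrightarrow> x - y \<in> K"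
    "x \<in> K \<Longrightarrow> y \<in> K \<Longrightarrow> x * y \<in> K" "x \<in> K \<Longrightarrow> inverse x \<in> K"
    using assms inv by (auto simp: subfield_of_C_def)
  show "x \<in> K \<Longrightarrow> - x \<in> K" using assms unfolding subfield_of_C_def
    by (metis diff_0)
  show "x \<in> K \<Longrightarrow> y \<in> K \<Longrightarrow> x / y \<in> K"
    using assms inv unfolding subfield_of_C_def by (simp add: divide_inverse)
qed

lemma sf_sum:
  assumes "subfield_of_C K" "\<And>x. x \<in> A \<Longrightarrow> f x \<in> K"
  shows "sum f A \<in> K"
  using assms(2)
  by (induction A rule: infinite_finite_induct) (auto intro: sfK[OF assms(1)])

lemma sf_prod:
  assumes "subfield_of_C K" "\<And>x. x \<in> A \<Longrightarrow> f x \<in> K"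
  shows "prod f A \<in> K"
  using assms(2)
  by (induction A rule: infinite_finite_induct) (auto intro: sfK[OF assms(1)])

lemma sf_det:
  fixes A :: "complex^'n^'n"
  assumes "subfield_of_C K" "\<And>i j. A $ i $ j \<in> K"
  shows "det A \<in> K"
  unfolding det_def
proof (rule sf_sum[OF assms(1)])
  fix p :: "'n \<Rightarrow> 'n" assume "p \<in> {p. p permutes UNIV}"
  have s: "of_int (sign p) \<in> K"
    using sfK[OF assms(1)] by (cases "sign p = 1") (auto simp: sign_def)
  show "of_int (sign p) * (\<Prod>i\<in>UNIV. A $ i $ p i) \<in> K"
    by (intro sfK(5)[OF assms(1)] s sf_prod[OF assms(1)] assms(2))
qed

lemma subspace_bf1: "vec.subspace {x :: complex^'q. (\<Sum>l\<in>UNIV. x $ l * u $ l) = 0}"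
  by (auto simp: vec.subspace_def sum.distrib algebra_simps sum_distrib_left[symmetric])

lemma subspace_bfW: "vec.subspace {v :: complex^'q. \<forall>n. (\<Sum>l\<in>UNIV. \<rho> n $ l * v $ l) = 0}"
  by (auto simp: vec.subspace_def sum.distrib algebra_simps sum_distrib_left[symmetric])

lemma kernel_defined_over:
  fixes \<rho> :: "'i \<Rightarrow> complex^'q::finite"
  assumes sf: "subfield_of_C K" and rK: "\<And>n l. \<rho> n $ l \<in> K"
    and Wdef: "W = {v. \<forall>n. (\<Sum>l\<in>UNIV. \<rho> n $ l * v $ l) = 0}"
  shows "vec.subspace W \<and> defined_over K W"
proof -
  define bf :: "complex^'q \<Rightarrow> complex^'q \<Rightarrow> complex" where "bf x u = (\<Sum>l\<in>UNIV. x $ l * u $ l)" for x u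
  have subW: "vec.subspace W" unfolding Wdef by (rule subspace_bfW)
  define Kq where "Kq = {v :: complex^'q. \<forall>i. v $ i \<in> K}"
  define R where "R = range \<rho>"
  obtain B0 where B0: "B0 \<subseteq> R" "vec.independent B0" "R \<subseteq> vec.span B0"
    using vec.maximal_independent_subset by blast
  obtain B where B: "B0 \<subseteq> B" "B \<subseteq> B0 \<union> cart_basis" "vec.independent B" "B0 \<union> cart_basis \<subseteq> vec.span B"
    using vec.maximal_independent_subset_extend[of B0 "B0 \<union> cart_basis"] B0 by blast
  have spanB: "vec.span B = UNIV"
    using B(4) span_cart_basis vec.span_mono vec.span_span by (metis le_sup_iff top.extremum_uniqueI)
  have finB: "finite B" using B(3) vec.independent_bound_general by blast
  have cardB: "card B = CARD('q)"
    using vec.basis_card_eq_dim[of B UNIV] B(3) spanB vec_dim_card by auto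
  obtain f where f: "bij_betw f (UNIV::'q set) B"
    using finite_same_card_bij[of "UNIV::'q set" B] finB cardB by auto
  have BK: "b \<in> Kq" if "b \<in> B" for b
  proof -
    have "b \<in> R \<or> b \<in> cart_basis" using that B B0 by blast
    then show ?thesis
    proof
      assume "b \<in> R" then show ?thesis using rK by (auto simp: R_def Kq_def)
    next
      assume "b \<in> cart_basis" then show ?thesis
        using sfK[OF sf] by (auto simp: cart_basis_def Kq_def axis_def)
    qed
  qed
  define Mx :: "complex^'q^'q" where "Mx = (\<chi> k. f k)"
  have Mxrow: "Mx $ k = f k" for k by (simp add: Mx_def)
  have MxK: "Mx $ i $ j \<in> K" for i j
    using BK[of "f i"] f by (auto simp: Mxrow Kq_def bij_betw_def)
  have "invertible Mx"
    unfolding invertible_right_inverse matrix_right_invertible_independent_rows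
  proof (intro allI impI)
    fix c :: "'q \<Rightarrow> complex" and i
    assume "(\<Sum>i\<in>UNIV. c i *s row i Mx) = 0"
    hence "(\<Sum>i\<in>UNIV. c i *s f i) = 0" by (simp add: row_def Mxrow)
    hence "(\<Sum>b\<in>B. c (the_inv_into UNIV f b) *s b) = 0"
      using sum.reindex_bij_betw[OF f, of "\<lambda>b. c (the_inv_into UNIV f b) *s b"] f
      by (simp add: bij_betw_def the_inv_into_f_f)
    moreover have "\<forall>c. (\<Sum>v\<in>B. c v *s v) = 0 \<longrightarrow> (\<forall>v\<in>B. c v = 0)"
      using B(3) unfolding vec.independent_explicit by blast
    ultimately have "\<forall>b\<in>B. c (the_inv_into UNIV f b) = 0"
      by (rule_tac mp[OF spec[where x="\<lambda>b. c (the_inv_into UNIV f b)"]]) auto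
    moreover have "f i \<in> B" using f by (auto simp: bij_betw_def)
    ultimately show "c i = 0" using f by (metis bij_betw_def the_inv_into_f_f UNIV_I)
  qed
  hence det0: "det Mx \<noteq> 0" by (simp add: invertible_det_nz)
  define u where "u k = (\<chi> l. det (\<chi> i j. if j = l then axis k 1 $ i else Mx$i$j) / det Mx)" for k
  have Mu: "Mx *v u k = axis k 1" for k
    using cramer[OF det0, of "u k" "axis k 1"] by (simp add: u_def)
  have inj: "x = y" if "Mx *v x = Mx *v y" for x y
    using cramer[OF det0, of x "Mx *v y"] cramer[OF det0, of y "Mx *v y"] that by simp
  have uK: "u k \<in> Kq" for k
    unfolding Kq_def u_def
    by (auto intro!: sfK(6)[OF sf] sf_det[OF sf] simp: MxK axis_def sfK[OF sf])
  have Mxbf: "(Mx *v x) $ k = bf (f k) x" for x k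
    by (simp add: matrix_vector_mult_def bf_def Mxrow)
  define S where "S = {k. f k \<notin> B0}"
  have uW: "u k \<in> W" if "k \<in> S" for k
  proof -
    have "bf x (u k) = 0" if "x \<in> vec.span B0" for x
    proof (rule vec.span_induct[OF that])
      show "vec.subspace {x. bf x (u k) = 0}" unfolding bf_def by (rule subspace_bf1)
    next
      fix x assume x: "x \<in> B0"
      then obtain k' where k': "x = f k'" using f B(1) by (auto simp: bij_betw_def)
      have "k' \<noteq> k" using x k' \<open>k \<in> S\<close> by (auto simp: S_def)
      have "bf x (u k) = (Mx *v u k) $ k'" by (simp add: Mxbf k')
      also have "\<dots> = 0" using \<open>k' \<noteq> k\<close> by (simp add: Mu axis_def)
      finally show "bf x (u k) = 0" by simp
    qed
    then have "bf (\<rho> n) (u k) = 0" for n using B0(3) by (auto simp: R_def)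
    then show ?thesis by (simp add: Wdef bf_def)
  qed
  have Wspan: "w \<in> vec.span (W \<inter> Kq)" if w: "w \<in> W" for w
  proof -
    have zero: "(Mx *v w) $ k = 0" if "k \<notin> S" for k
    proof -
      have "f k \<in> R" using that B0 by (auto simp: S_def)
      then obtain n where "f k = \<rho> n" by (auto simp: R_def)
      then show ?thesis using w by (simp add: Mxbf bf_def Wdef)
    qed
    have "Mx *v (\<Sum>k\<in>S. (Mx *v w) $ k *s u k) = Mx *v w"
    proof (subst vec_eq_iff, intro allI)
      fix i
      have "(Mx *v (\<Sum>k\<in>S. (Mx *v w) $ k *s u k)) $ i
          = (\<Sum>k\<in>S. (Mx *v w) $ k * (Mx *v u k) $ i)"
        by (simp add: matrix_vector_mult_def sum_component sum_distrib_left algebra_simps sum.swap[of _ S])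
      also have "\<dots> = (\<Sum>k\<in>S. (Mx *v w) $ k * axis k 1 $ i)" by (simp add: Mu)
      also have "\<dots> = (Mx *v w) $ i"
        using zero[of i] by (auto simp: axis_def if_distrib cong: if_cong)
      finally show "(Mx *v (\<Sum>k\<in>S. (Mx *v w) $ k *s u k)) $ i = (Mx *v w) $ i" .
    qed
    hence "w = (\<Sum>k\<in>S. (Mx *v w) $ k *s u k)" using inj by metis
    also have "\<dots> \<in> vec.span (W \<inter> Kq)"
      by (intro vec.span_sum vec.span_scale vec.span_base) (auto intro: uW uK)
    finally show ?thesis .
  qed
  have spanWK: "vec.span (W \<inter> Kq) = W"
    using vec.span_subspace[of "W \<inter> Kq" W] Wspan subW by blast
  obtain Bf where Bf: "Bf \<subseteq> W \<inter> Kq" "vec.independent Bf" "W \<inter> Kq \<subseteq> vec.span Bf"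
    using vec.maximal_independent_subset by blast
  have "vec.span Bf = W"
  proof
    show "vec.span Bf \<subseteq> W" using vec.span_mono[OF Bf(1)] spanWK by blast
    show "W \<subseteq> vec.span Bf" using vec.span_mono[OF Bf(3)] spanWK vec.span_span by metis
  qed
  then show ?thesis using subW Bf unfolding defined_over_def Kq_def by blast
qed



fun Mrec :: "('q::finite \<Rightarrow> 'q \<Rightarrow> complex fps) \<Rightarrow> nat \<Rightarrow> complex^'q^'q" where
  "Mrec A 0 = mat 1"
| "Mrec A (Suc n) = (\<chi> i l. (\<Sum>j\<in>UNIV. \<Sum>k\<in>{0..n}. A i j $ k * Mrec A (n-k) $ j $ l) / of_nat (Suc n))"

lemma Mrec_step:
  "(Mrec A (Suc n) *v v) $ i * of_nat (Suc n) =
     (\<Sum>j\<in>UNIV. \<Sum>k\<in>{0..n}. A i j $ k * (Mrec A (n-k) *v v) $ j)"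
proof -
  have e: "Mrec A (Suc n) $ i $ l * of_nat (Suc n) = (\<Sum>j\<in>UNIV. \<Sum>k\<in>{0..n}. A i j $ k * Mrec A (n-k) $ j $ l)" for l
    by (simp only: Mrec.simps(2) vec_lambda_beta) (simp del: of_nat_Suc)
  have "(Mrec A (Suc n) *v v) $ i * of_nat (Suc n) =
     (\<Sum>l\<in>UNIV. (Mrec A (Suc n) $ i $ l * of_nat (Suc n)) * v $ l)"
    unfolding matrix_vector_mult_def vec_lambda_beta sum_distrib_right
    by (intro sum.cong refl) (simp only: ac_simps)
  also have "\<dots> = (\<Sum>l\<in>UNIV. (\<Sum>j\<in>UNIV. \<Sum>k\<in>{0..n}. A i j $ k * Mrec A (n-k) $ j $ l) * v $ l)"
    by (simp only: e)
  also have "\<dots> = (\<Sum>j\<in>UNIV. \<Sum>k\<in>{0..n}. A i j $ k * (Mrec A (n-k) *v v) $ j)"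
  proof -
    have "(\<Sum>l\<in>UNIV. (\<Sum>j\<in>UNIV. \<Sum>k\<in>{0..n}. A i j $ k * Mrec A (n-k) $ j $ l) * v $ l)
        = (\<Sum>l\<in>UNIV. \<Sum>j\<in>UNIV. \<Sum>k\<in>{0..n}. A i j $ k * Mrec A (n-k) $ j $ l * v $ l)"
      by (simp only: sum_distrib_right)
    also have "\<dots> = (\<Sum>j\<in>UNIV. \<Sum>l\<in>UNIV. \<Sum>k\<in>{0..n}. A i j $ k * Mrec A (n-k) $ j $ l * v $ l)"
      by (rule sum.swap)
    also have "\<dots> = (\<Sum>j\<in>UNIV. \<Sum>k\<in>{0..n}. \<Sum>l\<in>UNIV. A i j $ k * Mrec A (n-k) $ j $ l * v $ l)"
      by (intro sum.cong refl sum.swap)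
    also have "\<dots> = (\<Sum>j\<in>UNIV. \<Sum>k\<in>{0..n}. A i j $ k * (Mrec A (n-k) *v v) $ j)"
      by (intro sum.cong refl) (simp only: matrix_vector_mult_def vec_lambda_beta sum_distrib_left mult.assoc)
    finally show ?thesis .
  qed
  finally show ?thesis .
qed

definition Fv :: "('q::finite \<Rightarrow> 'q \<Rightarrow> complex fps) \<Rightarrow> complex^'q \<Rightarrow> 'q \<Rightarrow> complex fps" where
  "Fv A v i = Abs_fps (\<lambda>n. (Mrec A n *v v) $ i)"

lemma Fv_0: "Fv A v i $ 0 = v $ i"
  by (simp add: Fv_def)

lemma Fv_deriv: "fps_deriv (Fv A v i) = (\<Sum>j\<in>UNIV. A i j * Fv A v j)"
proof (rule fps_ext)
  fix n
  have "fps_deriv (Fv A v i) $ n = (Mrec A (Suc n) *v v) $ i * of_nat (Suc n)"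
    by (simp add: Fv_def del: Mrec.simps of_nat_Suc)
  also have "\<dots> = (\<Sum>j\<in>UNIV. \<Sum>k\<in>{0..n}. A i j $ k * (Mrec A (n-k) *v v) $ j)"
    by (rule Mrec_step)
  also have "\<dots> = (\<Sum>j\<in>UNIV. A i j * Fv A v j) $ n"
    by (simp add: fps_sum_nth fps_mult_nth Fv_def del: Mrec.simps)
  finally show "fps_deriv (Fv A v i) $ n = (\<Sum>j\<in>UNIV. A i j * Fv A v j) $ n" .
qed

lemma Mrec_uniq:
  fixes F :: "'q::finite \<Rightarrow> complex fps" and v :: "complex^'q" and A :: "'q \<Rightarrow> 'q \<Rightarrow> complex fps"
  assumes F0: "\<And>i. F i $ 0 = v $ i" and FD: "\<And>i. fps_deriv (F i) = (\<Sum>j\<in>UNIV. A i j * F j)"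
  shows "F i $ n = (Mrec A n *v v) $ i"
proof (induction n arbitrary: i rule: less_induct)
  case (less n)
  show ?case
  proof (cases n)
    case 0 then show ?thesis by (simp add: F0)
  next
    case (Suc m)
    have "F i $ Suc m * of_nat (Suc m) = fps_deriv (F i) $ m"
      by (simp del: of_nat_Suc)
    also have "\<dots> = (\<Sum>j\<in>UNIV. \<Sum>k\<in>{0..m}. A i j $ k * F j $ (m-k))"
      by (simp add: FD fps_sum_nth fps_mult_nth)
    also have "\<dots> = (\<Sum>j\<in>UNIV. \<Sum>k\<in>{0..m}. A i j $ k * (Mrec A (m-k) *v v) $ j)"
      by (intro sum.cong refl) (simp add: less Suc del: Mrec.simps)
    also have "\<dots> = (Mrec A (Suc m) *v v) $ i * of_nat (Suc m)"
      by (rule Mrec_step[symmetric])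
    finally show ?thesis using Suc by (simp del: Mrec.simps of_nat_Suc)
  qed
qed

lemma sf_of_nat: "subfield_of_C K \<Longrightarrow> of_nat n \<in> K"
  by (induction n) (auto intro: sfK)

lemma Mrec_K:
  fixes A :: "'q::finite \<Rightarrow> 'q \<Rightarrow> complex fps"
  assumes sf: "subfield_of_C K" and AK: "\<And>i j k. A i j $ k \<in> K"
  shows "Mrec A n $ i $ l \<in> K"
proof (induction n arbitrary: i l rule: less_induct)
  case (less n)
  show ?case
  proof (cases n)
    case 0 then show ?thesis using sfK[OF sf] by (simp add: mat_def)
  next
    case (Suc m)
    show ?thesis unfolding Suc Mrec.simps vec_lambda_beta
      by (intro sfK(6)[OF sf] sf_sum[OF sf] sfK(5)[OF sf] AK less[unfolded Suc])
         (auto intro: sf_sum[OF sf] simp: sfK[OF sf] sf_of_nat[OF sf])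
  qed
qed

lemma geom_le2:
  fixes x :: real assumes "0 \<le> x" "x \<le> 1/2"
  shows "(\<Sum>k\<in>{0..m}. x^k) \<le> 2"
proof -
  have "(\<Sum>k\<in>{0..m}. x^k) = (\<Sum>k<Suc m. x^k)"
    by (simp add: atLeast0AtMost lessThan_Suc_atMost)
  also have "\<dots> = (1 - x^Suc m) / (1 - x)"
    using assms by (subst sum_gp_strict) auto
  also have "\<dots> \<le> 1 / (1 - x)"
    using assms by (intro divide_right_mono) auto
  also have "\<dots> \<le> 2" using assms by (simp add: field_simps)
  finally show ?thesis .
qed

lemma Mrec_bound:
  fixes A :: "'q::finite \<Rightarrow> 'q \<Rightarrow> complex fps" and v :: "complex^'q"
  assumes r: "r > 0" and Mb: "Mb \<ge> 0" and Ab: "\<And>i j k. norm (A i j $ k) \<le> Mb / r^k"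
    and \<beta>: "\<beta> = max (2/r) (2 * real CARD('q) * Mb)"
  shows "(\<Sum>i\<in>UNIV. norm ((Mrec A n *v v) $ i)) \<le> (\<Sum>i\<in>UNIV. norm (v $ i)) * \<beta>^n"
proof (induction n rule: less_induct)
  case (less n)
  define S where "S m = (\<Sum>i\<in>UNIV. norm ((Mrec A m *v v) $ i))" for m
  define C where "C = (\<Sum>i\<in>UNIV. norm (v $ i))"
  have C0: "C \<ge> 0" unfolding C_def by (intro sum_nonneg) auto
  have bpos: "\<beta> > 0"
  proof -
    have "2/r > 0" using r by simp
    thus ?thesis unfolding \<beta> by (rule max.strict_coboundedI1)
  qed
  have rb: "r * \<beta> \<ge> 2"
  proof -
    have "2/r \<le> \<beta>" unfolding \<beta> by simp
    thus ?thesis using r by (simp add: field_simps)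
  qed
  have qb: "2 * real CARD('q) * Mb \<le> \<beta>" using \<beta> by auto
  show ?case
  proof (cases n)
    case 0 then show ?thesis by simp
  next
    case (Suc m)
    have IH: "S (m - k) \<le> C * \<beta>^(m-k)" for k
      using less[of "m-k"] Suc by (simp add: S_def C_def del: Mrec.simps)
    have comp: "norm ((Mrec A (Suc m) *v v) $ i) \<le>
        (\<Sum>j\<in>UNIV. \<Sum>k\<in>{0..m}. Mb / r^k * norm ((Mrec A (m-k) *v v) $ j))" for i
    proof -
      have "norm ((Mrec A (Suc m) *v v) $ i) \<le> norm ((Mrec A (Suc m) *v v) $ i) * real (Suc m)"
        by (intro mult_le_cancel_left1[THEN iffD2]) (auto simp del: Mrec.simps)
      also have "\<dots> = norm ((Mrec A (Suc m) *v v) $ i * of_nat (Suc m))"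
        by (simp add: norm_mult del: Mrec.simps of_nat_Suc)
      also have "\<dots> = norm (\<Sum>j\<in>UNIV. \<Sum>k\<in>{0..m}. A i j $ k * (Mrec A (m-k) *v v) $ j)"
        by (simp only: Mrec_step)
      also have "\<dots> \<le> (\<Sum>j\<in>UNIV. \<Sum>k\<in>{0..m}. norm (A i j $ k * (Mrec A (m-k) *v v) $ j))"
        by (rule order_trans[OF norm_sum sum_mono[OF norm_sum]])
      also have "\<dots> \<le> (\<Sum>j\<in>UNIV. \<Sum>k\<in>{0..m}. Mb / r^k * norm ((Mrec A (m-k) *v v) $ j))"
        by (intro sum_mono) (simp only: norm_mult, rule mult_right_mono[OF Ab norm_ge_zero])
      finally show ?thesis .
    qed
    have "S (Suc m) \<le> (\<Sum>i\<in>(UNIV::'q set). \<Sum>j\<in>UNIV. \<Sum>k\<in>{0..m}. Mb / r^k * norm ((Mrec A (m-k) *v v) $ j))"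
      unfolding S_def by (intro sum_mono comp)
    also have "\<dots> = real CARD('q) * (\<Sum>k\<in>{0..m}. Mb / r^k * S (m-k))"
      by (simp add: S_def sum_distrib_left sum.swap[of _ "{0..m}"] del: Mrec.simps)
    also have "\<dots> \<le> real CARD('q) * (\<Sum>k\<in>{0..m}. Mb / r^k * (C * \<beta>^(m-k)))"
      using r Mb by (intro mult_left_mono sum_mono IH) auto
    also have "\<dots> = real CARD('q) * Mb * C * \<beta>^m * (\<Sum>k\<in>{0..m}. (1/(r*\<beta>))^k)"
    proof -
      have "Mb / r^k * (C * \<beta>^(m-k)) = Mb * C * \<beta>^m * (1/(r*\<beta>))^k" if "k \<in> {0..m}" for k
      proof -
        have "\<beta>^m = \<beta>^(m-k) * \<beta>^k" using that by (simp add: power_add[symmetric])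
        then show ?thesis using r bpos by (simp add: field_simps power_mult_distrib)
      qed
      then show ?thesis by (simp add: sum_distrib_left mult.assoc)
    qed
    also have "\<dots> \<le> real CARD('q) * Mb * C * \<beta>^m * 2"
      using r bpos rb Mb C0 by (intro mult_left_mono geom_le2) (auto simp: field_simps)
    also have "\<dots> = (2 * real CARD('q) * Mb) * (C * \<beta>^m)" by simp
    also have "\<dots> \<le> \<beta> * (C * \<beta>^m)"
      using qb C0 bpos by (intro mult_right_mono) auto
    also have "\<dots> = C * \<beta>^n" using Suc by simp
    finally show ?thesis using Suc by (simp add: S_def C_def del: Mrec.simps)
  qed
qed

lemma Fv_radius:
  fixes A :: "'q::finite \<Rightarrow> 'q \<Rightarrow> complex fps" and v :: "complex^'q"
  assumes r: "r > 0" and Mb: "Mb \<ge> 0" and Ab: "\<And>i j k. norm (A i j $ k) \<le> Mb / r^k"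
  shows "fps_conv_radius (Fv A v i) > 0"
proof -
  define \<beta> where "\<beta> = max (2/r) (2 * real CARD('q) * Mb)"
  define C where "C = (\<Sum>i\<in>UNIV. norm (v $ i))"
  have bpos: "\<beta> > 0"
  proof -
    have "2/r > 0" using r by simp
    thus ?thesis unfolding \<beta>_def by (rule max.strict_coboundedI1)
  qed
  define z :: complex where "z = of_real (1 / (2 * \<beta>))"
  have nz: "norm z = 1 / (2 * \<beta>)" unfolding z_def norm_of_real using bpos by simp
  have b: "norm (Fv A v i $ n * z^n) \<le> C * (1/2)^n" for n
  proof -
    have "norm (Fv A v i $ n) \<le> (\<Sum>i\<in>UNIV. norm ((Mrec A n *v v) $ i))"
      unfolding Fv_def fps_nth_Abs_fps
      by (rule member_le_sum) auto
    also have "\<dots> \<le> C * \<beta>^n"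
      unfolding C_def by (rule Mrec_bound[OF r Mb Ab \<beta>_def])
    finally have fb: "norm (Fv A v i $ n) \<le> C * \<beta>^n" .
    have "norm (Fv A v i $ n * z^n) = norm (Fv A v i $ n) * (1 / (2 * \<beta>))^n"
      by (simp only: norm_mult norm_power nz)
    also have "\<dots> \<le> C * \<beta>^n * (1 / (2 * \<beta>))^n"
      by (rule mult_right_mono[OF fb]) (use bpos in simp)
    also have "\<dots> = C * (1/2)^n"
    proof -
      have h: "\<beta> * (1 / (2 * \<beta>)) = 1/2" using bpos by simp
      show ?thesis by (metis mult.assoc power_mult_distrib h)
    qed
    finally show ?thesis .
  qed
  have "summable (\<lambda>n. Fv A v i $ n * z^n)"
  proof (rule summable_comparison_test')
    show "summable (\<lambda>n. C * (1/2::real)^n)" by (intro summable_mult summable_geometric) auto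
    show "norm (Fv A v i $ n * z^n) \<le> C * (1/2)^n" for n by (rule b)
  qed
  hence "ereal (norm z) \<le> fps_conv_radius (Fv A v i)"
    unfolding fps_conv_radius_def by (rule conv_radius_geI)
  moreover have "norm z > 0" using bpos nz by simp
  ultimately show ?thesis by (meson ereal_less(2) less_le_trans)
qed

lemma coeff_bound_exists:
  fixes A :: "'q::finite \<Rightarrow> 'q \<Rightarrow> complex fps"
  assumes pos: "\<And>i j. fps_conv_radius (A i j) > 0"
  shows "\<exists>r Mb. r > 0 \<and> Mb \<ge> 0 \<and> (\<forall>i j k. norm (A i j $ k) \<le> Mb / r^k)"
proof -
  have "\<forall>p::'q\<times>'q. \<exists>t. 0 < t \<and> ereal t < fps_conv_radius (A (fst p) (snd p))"
    using pos ereal_dense2 by (metis ereal_less(2))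
  then obtain tf where tf: "\<And>p. 0 < tf p \<and> ereal (tf p) < fps_conv_radius (A (fst p) (snd p))"
    by metis
  define r where "r = Min (range tf)"
  have r0: "r > 0" unfolding r_def using tf by (subst Min_gr_iff) auto
  have rle: "r \<le> tf p" for p unfolding r_def by (rule Min_le) auto
  have rr: "norm (of_real r :: complex) < fps_conv_radius (A i j)" for i j
    using tf[of "(i,j)"] rle[of "(i,j)"] r0 by simp (meson ereal_less_eq(3) order.strict_trans1)
  define T where "T n = (\<Sum>p\<in>(UNIV::('q\<times>'q) set). norm (A (fst p) (snd p) $ n * of_real r ^ n))" for n
  have "summable T" unfolding T_def
    by (intro summable_sum norm_summable_fps) (use rr in auto)
  hence "T \<longlonglongrightarrow> 0" by (rule summable_LIMSEQ_zero)
  hence "Bseq T" using convergent_imp_Bseq convergentI by blast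
  then obtain Mb where Mb: "Mb > 0" "\<And>n. norm (T n) \<le> Mb" unfolding Bseq_def by blast
  have "norm (A i j $ k) \<le> Mb / r^k" for i j k
  proof -
    have "norm (A i j $ k * of_real r ^ k) \<le> T k"
      unfolding T_def by (rule member_le_sum[where f="\<lambda>p. norm (A (fst p) (snd p) $ k * of_real r ^ k)" and i="(i,j)", simplified]) auto
    also have "\<dots> \<le> Mb" using Mb(2)[of k] by simp
    finally have "norm (A i j $ k) * r^k \<le> Mb" using r0 by (simp add: norm_mult norm_power)
    thus ?thesis using r0 by (simp add: field_simps)
  qed
  thus ?thesis using r0 Mb by (intro exI[of _ r] exI[of _ Mb]) auto
qed



lemma po_add: "poly_over K p \<Longrightarrow> poly_over K q \<Longrightarrow> subfield_of_C K \<Longrightarrow> poly_over K (p + q)"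
  by (auto simp: poly_over_def intro: sfK)

lemma po_mult: "poly_over K p \<Longrightarrow> poly_over K q \<Longrightarrow> subfield_of_C K \<Longrightarrow> poly_over K (p * q)"
  unfolding poly_over_def coeff_mult by (auto intro!: sf_sum sfK(5))

lemma po_const: "a \<in> K \<Longrightarrow> subfield_of_C K \<Longrightarrow> poly_over K [:a:]"
  by (auto simp: poly_over_def coeff_pCons sfK split: nat.split)

lemma po_lin: "a \<in> K \<Longrightarrow> subfield_of_C K \<Longrightarrow> poly_over K [:a, 1:]"
  by (auto simp: poly_over_def coeff_pCons sfK split: nat.split)

lemma po_shift:
  assumes sf: "subfield_of_C K" and aK: "a \<in> K" and p: "poly_over K p"
  shows "poly_over K (pcompose p [:a, 1:])"
  using p
proof (induction p)
  case 0 then show ?case by (simp add: poly_over_def sfK[OF sf])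
next
  case (pCons c p)
  have cK: "c \<in> K" using pCons.prems by (auto simp: poly_over_def dest: spec[of _ 0])
  have pK: "poly_over K p" using pCons.prems unfolding poly_over_def
    by (metis coeff_pCons_Suc)
  show ?case unfolding pcompose_pCons
    by (intro po_add po_mult po_const po_lin cK aK sf pCons.IH pK)
qed

lemma inv_fps_K:
  fixes G :: "complex fps"
  assumes sf: "subfield_of_C K" and GK: "\<And>n. G $ n \<in> K"
  shows "inverse G $ n \<in> K"
proof -
  have "fps_right_inverse_constructor G (inverse (G$0)) n \<in> K"
  proof (induction n rule: less_induct)
    case (less n)
    show ?case
    proof (cases n)
      case 0 then show ?thesis using sfK(8)[OF sf GK] by simp
    next
      case (Suc m)
      show ?thesis unfolding Suc fps_right_inverse_constructor.simps
        by (intro sfK(5)[OF sf] sfK(7)[OF sf] sfK(8)[OF sf] GK sf_sum[OF sf] less)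
           (auto simp: Suc)
    qed
  qed
  then show ?thesis by (simp add: fps_inverse_def)
qed

lemma poly_has_fps: "(\<lambda>w. poly p w) has_fps_expansion fps_of_poly p"
proof -
  have "eval_fps (fps_of_poly p) has_fps_expansion fps_of_poly p"
    by (rule eval_fps_has_fps_expansion) simp
  also have "eval_fps (fps_of_poly p) = (\<lambda>w. poly p w)" by (rule ext) simp
  finally show ?thesis .
qed

lemma poly_shift_has_fps:
  "(\<lambda>w. poly p (a + w)) has_fps_expansion fps_of_poly (pcompose p [:a, 1:])"
proof -
  have "(\<lambda>w. poly (pcompose p [:a, 1:]) w) = (\<lambda>w. poly p (a + w))"
    by (rule ext) (simp add: poly_pcompose)
  then show ?thesis using poly_has_fps[of "pcompose p [:a, 1:]"] by simp
qed

theorem lemma1: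
  fixes K :: "complex set"
    and Pn Pd :: "'q::finite \<Rightarrow> 'q \<Rightarrow> complex poly"
    and \<alpha> :: complex
    and P :: "'q \<Rightarrow> complex poly"
  assumes "subfield_of_C K"
    and "\<forall>i j. poly_over K (Pn i j) \<and> poly_over K (Pd i j) \<and> Pd i j \<noteq> 0"
    and "\<alpha> \<in> K" and "\<alpha> \<noteq> 0"
    and "\<forall>i j. poly (Pd i j) \<alpha> \<noteq> 0"
    and "\<forall>i. poly_over K (P i)"
  shows "vec.subspace {Y \<alpha> | Y. \<exists>e>0. solves_on Pn Pd (ball \<alpha> e) Y \<and>
                 (\<forall>z\<in>ball \<alpha> e. (\<Sum>i\<in>UNIV. poly (P i) z * Y z $ i) = 0)}
       \<and> defined_over K {Y \<alpha> | Y. \<exists>e>0. solves_on Pn Pd (ball \<alpha> e) Y \<and>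
                 (\<forall>z\<in>ball \<alpha> e. (\<Sum>i\<in>UNIV. poly (P i) z * Y z $ i) = 0)}"
proof -
  note sf = assms(1)
  have PnK: "poly_over K (Pn i j)" and PdK: "poly_over K (Pd i j)" for i j
    using assms(2) by auto
  have aK: "\<alpha> \<in> K" by (rule assms(3))
  have Pda: "poly (Pd i j) \<alpha> \<noteq> 0" for i j using assms(5) by auto
  have PK: "poly_over K (P i)" for i using assms(6) by auto
  define sh where "sh p = pcompose p [:\<alpha>, 1:]" for p :: "complex poly"
  define A where "A i j = fps_of_poly (sh (Pn i j)) / fps_of_poly (sh (Pd i j))" for i j
  define Pt where "Pt i = fps_of_poly (sh (P i))" for i
  define rat where "rat i j z = poly (Pn i j) z / poly (Pd i j) z" for i j z
  have shK: "poly_over K p \<Longrightarrow> coeff (sh p) k \<in> K" for p k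
    using po_shift[OF sf aK] unfolding sh_def poly_over_def by blast
  have Pt_exp: "(\<lambda>w. poly (P i) (\<alpha> + w)) has_fps_expansion Pt i" for i
    unfolding Pt_def sh_def by (rule poly_shift_has_fps)
  have D0: "fps_of_poly (sh (Pd i j)) $ 0 \<noteq> 0" for i j
    using Pda[of i j] by (simp add: sh_def poly_0_coeff_0[symmetric] poly_pcompose)
  have Aexp: "(\<lambda>w. rat i j (\<alpha> + w)) has_fps_expansion A i j" for i j
    unfolding rat_def A_def
    by (rule has_fps_expansion_divide'[OF _ _ D0])
       (unfold sh_def; rule poly_shift_has_fps)+
  have Arad: "fps_conv_radius (A i j) > 0" for i j
    using Aexp[of i j] by (simp add: has_fps_expansion_def)
  have AK: "A i j $ k \<in> K" for i j k
  proof -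
    have "A i j = fps_of_poly (sh (Pn i j)) * inverse (fps_of_poly (sh (Pd i j)))"
      unfolding A_def by (rule fps_divide_unit[OF D0])
    then show ?thesis
      by (simp add: fps_mult_nth)
         (intro sf_sum[OF sf] sfK(5)[OF sf] shK PnK inv_fps_K[OF sf]; simp add: shK PdK)
  qed
  obtain r Mb where rM: "r > 0" "Mb \<ge> 0" "\<And>i j k. norm (A i j $ k) \<le> Mb / r^k"
    using coeff_bound_exists[of A, OF Arad] by blast
  have Frad: "fps_conv_radius (Fv A v i) > 0" for v i
    by (rule Fv_radius[OF rM])
  define \<rho> where "\<rho> n = (\<chi> l. \<Sum>i\<in>UNIV. \<Sum>k\<in>{0..n}. Pt i $ k * Mrec A (n-k) $ i $ l)" for n
  have \<rho>K: "\<rho> n $ l \<in> K" for n l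
    unfolding \<rho>_def vec_lambda_beta
    by (intro sf_sum[OF sf] sfK(5)[OF sf] Mrec_K[OF sf AK]) (simp add: Pt_def shK PK)
  have rel: "(\<Sum>i\<in>UNIV. Pt i * Fv A v i) $ n = (\<Sum>l\<in>UNIV. \<rho> n $ l * v $ l)" for v n
  proof -
    have "(\<Sum>i\<in>UNIV. Pt i * Fv A v i) $ n = (\<Sum>i\<in>UNIV. \<Sum>k\<in>{0..n}. \<Sum>l\<in>UNIV. Pt i $ k * Mrec A (n-k) $ i $ l * v $ l)"
      by (simp add: fps_sum_nth fps_mult_nth Fv_def matrix_vector_mult_def sum_distrib_left mult.assoc del: Mrec.simps)
    also have "\<dots> = (\<Sum>i\<in>UNIV. \<Sum>l\<in>UNIV. \<Sum>k\<in>{0..n}. Pt i $ k * Mrec A (n-k) $ i $ l * v $ l)"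
      by (intro sum.cong refl sum.swap)
    also have "\<dots> = (\<Sum>l\<in>UNIV. \<Sum>i\<in>UNIV. \<Sum>k\<in>{0..n}. Pt i $ k * Mrec A (n-k) $ i $ l * v $ l)"
      by (rule sum.swap)
    also have "\<dots> = (\<Sum>l\<in>UNIV. \<rho> n $ l * v $ l)"
      unfolding \<rho>_def vec_lambda_beta by (simp only: sum_distrib_right)
    finally show ?thesis .
  qed
  define W where "W = {v :: complex^'q. \<forall>n. (\<Sum>l\<in>UNIV. \<rho> n $ l * v $ l) = 0}"
  define V where "V = {Y \<alpha> | Y. \<exists>e>0. solves_on Pn Pd (ball \<alpha> e) Y \<and>
                 (\<forall>z\<in>ball \<alpha> e. (\<Sum>i\<in>UNIV. poly (P i) z * Y z $ i) = 0)}"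
  have "V \<subseteq> W"
  proof
    fix x assume "x \<in> V"
    then obtain Y e where x: "x = Y \<alpha>" and e: "e > 0" and sol: "solves_on Pn Pd (ball \<alpha> e) Y"
      and relz: "\<forall>z\<in>ball \<alpha> e. (\<Sum>i\<in>UNIV. poly (P i) z * Y z $ i) = 0"
      unfolding V_def by blast
    have dY: "((\<lambda>u. Y u $ i) has_field_derivative (\<Sum>j\<in>UNIV. rat i j z * Y z $ j)) (at z)"
      if "z \<in> ball \<alpha> e" for z i
      using sol that unfolding solves_on_def rat_def by blast
    have holo: "(\<lambda>u. Y u $ i) holomorphic_on ball \<alpha> e" for i
      unfolding holomorphic_on_def
      using dY field_differentiable_def field_differentiable_at_within by blast
    have ana: "(\<lambda>u. Y u $ i) analytic_on {\<alpha>}" for i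
    proof -
      have "(\<lambda>u. Y u $ i) analytic_on ball \<alpha> e" using holo[of i] analytic_on_open[of "ball \<alpha> e"] by simp
      moreover have "{\<alpha>} \<subseteq> ball \<alpha> e" using e by simp
      ultimately show ?thesis by (rule analytic_on_subset)
    qed
    define G where "G i = fps_expansion (\<lambda>u. Y u $ i) \<alpha>" for i
    have Gexp: "(\<lambda>w. Y (\<alpha> + w) $ i) has_fps_expansion G i" for i
      unfolding G_def using analytic_at_imp_has_fps_expansion[OF ana[of i]] by simp
    have G0: "G i $ 0 = Y \<alpha> $ i" for i
      using fps_nth_fps_expansion[OF Gexp[of i], of 0] by simp
    have evb: "eventually (\<lambda>w. \<alpha> + w \<in> ball \<alpha> e) (nhds 0)"
      unfolding eventually_nhds_metric using e by (auto intro!: exI[of _ e] simp: dist_norm)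
    have Gderiv: "fps_deriv (G i) = (\<Sum>j\<in>UNIV. A i j * G j)" for i
    proof -
      have h1: "deriv (\<lambda>w. Y (\<alpha> + w) $ i) has_fps_expansion fps_deriv (G i)"
        by (rule has_fps_expansion_deriv[OF Gexp])
      have h2: "(\<lambda>w. \<Sum>j\<in>UNIV. rat i j (\<alpha> + w) * Y (\<alpha> + w) $ j) has_fps_expansion (\<Sum>j\<in>UNIV. A i j * G j)"
        by (intro has_fps_expansion_sum has_fps_expansion_mult Aexp Gexp)
      have ev: "eventually (\<lambda>w. deriv (\<lambda>w. Y (\<alpha> + w) $ i) w = (\<Sum>j\<in>UNIV. rat i j (\<alpha> + w) * Y (\<alpha> + w) $ j)) (nhds 0)"
        using evb
      proof eventually_elim
        case (elim w)
        have "((\<lambda>x. Y (\<alpha> + x) $ i) has_field_derivative (\<Sum>j\<in>UNIV. rat i j (\<alpha> + w) * Y (\<alpha> + w) $ j) * 1) (at w)"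
          by (rule DERIV_chain2[where f="\<lambda>u. Y u $ i" and g="\<lambda>x. \<alpha> + x" and x=w, OF dY[OF elim]])
             (auto intro!: derivative_eq_intros)
        then show ?case by (simp add: DERIV_imp_deriv)
      qed
      have "(\<lambda>w. \<Sum>j\<in>UNIV. rat i j (\<alpha> + w) * Y (\<alpha> + w) $ j) has_fps_expansion fps_deriv (G i)"
        using has_fps_expansion_cong[OF ev refl] h1 by (rule iffD1)
      with h2 show ?thesis using fps_expansion_unique_complex by blast
    qed
    have GF: "G i = Fv A (Y \<alpha>) i" for i
    proof (rule fps_ext)
      fix n show "G i $ n = Fv A (Y \<alpha>) i $ n"
        using Mrec_uniq[of G "Y \<alpha>" A, OF G0 Gderiv] by (simp add: Fv_def del: Mrec.simps)
    qed
    have h3: "(\<lambda>w. \<Sum>i\<in>UNIV. poly (P i) (\<alpha> + w) * Y (\<alpha> + w) $ i) has_fps_expansion (\<Sum>i\<in>UNIV. Pt i * G i)"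
      by (intro has_fps_expansion_sum has_fps_expansion_mult Pt_exp Gexp)
    have "eventually (\<lambda>w. (\<Sum>i\<in>UNIV. poly (P i) (\<alpha> + w) * Y (\<alpha> + w) $ i) = 0) (nhds 0)"
      using evb by eventually_elim (use relz in blast)
    hence "(\<lambda>w. \<Sum>i\<in>UNIV. poly (P i) (\<alpha> + w) * Y (\<alpha> + w) $ i) has_fps_expansion 0"
      by (simp add: has_fps_expansion_0_iff)
    with h3 have "(\<Sum>i\<in>UNIV. Pt i * G i) = 0" using fps_expansion_unique_complex by blast
    hence "(\<Sum>i\<in>UNIV. Pt i * Fv A (Y \<alpha>) i) $ n = 0" for n by (simp add: GF)
    then show "x \<in> W" unfolding W_def x using rel by simp
  qed
  moreover have "W \<subseteq> V"
  proof
    fix v assume v: "v \<in> W"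
    define F where "F i = Fv A v i" for i
    define Y where "Y z = (\<chi> i. eval_fps (F i) (z - \<alpha>))" for z
    have Ya: "Y \<alpha> = v" by (simp add: Y_def vec_eq_iff eval_fps_at_0 F_def Fv_0)
    have FR: "fps_conv_radius (F i) > 0" for i unfolding F_def by (rule Frad)
    have Fexp: "eval_fps (F i) has_fps_expansion F i" for i by (rule eval_fps_has_fps_expansion[OF FR])
    have E1: "eventually (\<lambda>w. \<forall>i. ereal (norm w) < fps_conv_radius (F i)) (nhds 0)"
    proof (rule eventually_all_finite)
      fix i
      have "eventually (\<lambda>w. w \<in> eball 0 (fps_conv_radius (F i))) (nhds 0)"
        using FR[of i] by (intro eventually_nhds_in_open) (auto simp: zero_ereal_def)
      then show "eventually (\<lambda>w. ereal (norm w) < fps_conv_radius (F i)) (nhds 0)"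
        by eventually_elim simp
    qed
    have E2: "eventually (\<lambda>w. \<forall>i. eval_fps (fps_deriv (F i)) w = (\<Sum>j\<in>UNIV. rat i j (\<alpha> + w) * eval_fps (F j) w)) (nhds 0)"
    proof (rule eventually_all_finite)
      fix i
      have "(\<lambda>w. \<Sum>j\<in>UNIV. rat i j (\<alpha> + w) * eval_fps (F j) w) has_fps_expansion (\<Sum>j\<in>UNIV. A i j * F j)"
        by (intro has_fps_expansion_sum has_fps_expansion_mult Aexp Fexp)
      also have "(\<Sum>j\<in>UNIV. A i j * F j) = fps_deriv (F i)" unfolding F_def by (rule Fv_deriv[symmetric])
      finally show "eventually (\<lambda>w. eval_fps (fps_deriv (F i)) w = (\<Sum>j\<in>UNIV. rat i j (\<alpha> + w) * eval_fps (F j) w)) (nhds 0)"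
        by (simp add: has_fps_expansion_def)
    qed
    have E3: "eventually (\<lambda>w. (\<Sum>i\<in>UNIV. poly (P i) (\<alpha> + w) * eval_fps (F i) w) = 0) (nhds 0)"
    proof -
      have "(\<lambda>w. \<Sum>i\<in>UNIV. poly (P i) (\<alpha> + w) * eval_fps (F i) w) has_fps_expansion (\<Sum>i\<in>UNIV. Pt i * F i)"
        by (intro has_fps_expansion_sum has_fps_expansion_mult Pt_exp Fexp)
      also have "(\<Sum>i\<in>UNIV. Pt i * F i) = 0"
        using v rel by (auto simp: fps_eq_iff W_def F_def)
      finally show ?thesis by (simp add: has_fps_expansion_0_iff)
    qed
    from E1 E2 E3 have "eventually (\<lambda>w. (\<forall>i. ereal (norm w) < fps_conv_radius (F i)) \<and>
       (\<forall>i. eval_fps (fps_deriv (F i)) w = (\<Sum>j\<in>UNIV. rat i j (\<alpha> + w) * eval_fps (F j) w)) \<and>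
       (\<Sum>i\<in>UNIV. poly (P i) (\<alpha> + w) * eval_fps (F i) w) = 0) (nhds 0)"
      by eventually_elim blast
    then obtain d where d: "d > 0" and dP: "\<And>w. dist w 0 < d \<Longrightarrow> (\<forall>i. ereal (norm w) < fps_conv_radius (F i)) \<and>
       (\<forall>i. eval_fps (fps_deriv (F i)) w = (\<Sum>j\<in>UNIV. rat i j (\<alpha> + w) * eval_fps (F j) w)) \<and>
       (\<Sum>i\<in>UNIV. poly (P i) (\<alpha> + w) * eval_fps (F i) w) = 0"
      unfolding eventually_nhds_metric by blast
    have zw: "dist (z - \<alpha>) 0 < d" if "z \<in> ball \<alpha> d" for z
      using that by (simp add: dist_norm norm_minus_commute)
    have "solves_on Pn Pd (ball \<alpha> d) Y"
      unfolding solves_on_def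
    proof (intro ballI allI)
      fix z i assume z: "z \<in> ball \<alpha> d"
      note D = dP[OF zw[OF z]]
      have "((\<lambda>u. eval_fps (F i) (u - \<alpha>)) has_field_derivative eval_fps (fps_deriv (F i)) (z - \<alpha>) * 1) (at z)"
        by (rule DERIV_chain2[where f="eval_fps (F i)" and g="\<lambda>u. u - \<alpha>" and x=z,
              OF has_field_derivative_eval_fps])
           (use D in \<open>auto intro!: derivative_eq_intros\<close>)
      moreover have "eval_fps (fps_deriv (F i)) (z - \<alpha>) = (\<Sum>j\<in>UNIV. (poly (Pn i j) z / poly (Pd i j) z) * Y z $ j)"
        using D by (simp add: Y_def rat_def)
      ultimately show "((\<lambda>w. Y w $ i) has_field_derivative
         (\<Sum>j\<in>UNIV. (poly (Pn i j) z / poly (Pd i j) z) * Y z $ j)) (at z)"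
        by (simp add: Y_def)
    qed
    moreover have "\<forall>z\<in>ball \<alpha> d. (\<Sum>i\<in>UNIV. poly (P i) z * Y z $ i) = 0"
    proof
      fix z assume z: "z \<in> ball \<alpha> d"
      show "(\<Sum>i\<in>UNIV. poly (P i) z * Y z $ i) = 0"
        using dP[OF zw[OF z]] by (simp add: Y_def)
    qed
    ultimately show "v \<in> V" unfolding V_def using d Ya by blast
  qed
  ultimately have "V = W" by blast
  then show ?thesis
    using kernel_defined_over[OF sf \<rho>K W_def] unfolding V_def by simp
qed

end
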